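(* Let $\omega\colon\mathbf Z_+\to(0,+\infty)$ be a positive weight and let $f(z)=\sum_{k\ge3}c_kz^k\in\mathcal X_\omega$ be such that for every $n\ge0$ and every $m\ge1$, \[\frac{c_{(6m+4)2^n}}{\omega((6m+4)2^n)}=\frac{c_{(2m+1)2^n}}{\omega((2m+1)2^n)}\quad\text{and}\quad c_{2^{n+2}}=0.\] Then for every $k\ge3$ with $k\notin\{2^i;\ i\ge2\}$ there exist integer sequences $(m_n)_{n\ge1}$, $(p_n)_{n\ge1}$, $(j_n)_{n\ge1}$ (depending on $k$) such that: (i) $c_k=\big(\omega((2m_1+1)2^{p_1})/\omega((6m_n+4)2^{p_n})\big)\,c_{(6m_n+4)2^{p_n}}$ for every $n\ge1$; (ii) $m_n\ge1$ for every $n\ge1$; (iii) $3m_n+2=T^{j_n}(k)$ for every $n\ge1$; (iv) for every $n\ge1$, $j_{n+1}>j_n$ if and only if $3m_n+2\notin\{2^i;\ i\ge2\}$; (v) $(j_n)_{n\ge1}$ and $((6m_n+4)2^{p_n})_{n\ge1}$ are either both strictly increasing or both stationary.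
   Context: $T\colon\mathbf Z_+\to\mathbf Z_+$ is the modified Collatz map: $T(n)=n/2$ for $n$ even, $T(n)=(3n+1)/2$ for $n$ odd. $\mathcal X_\omega$ is the Hilbert space of holomorphic functions $f(z)=\sum_{n\ge3}c_nz^n$ on the unit disk with $\|f\|_\omega^2=\sum_{n\ge3}|c_n|^2/\omega(n)<\infty$. *)

theory Defs
  imports Complex_Main
begin

definition collatzT :: "nat \<Rightarrow> nat" where
  "collatzT n = (if even n then n div 2 else (3 * n + 1) div 2)"

text \<open>Membership in the weighted Hilbert space X_omega, expressed through the
  Taylor coefficients c of f(z) = sum_{n>=3} c_n z^n.\<close>
definition in_X_omega :: "(nat \<Rightarrow> real) \<Rightarrow> (nat \<Rightarrow> complex) \<Rightarrow> bool" where
  "in_X_omega \<omega> c \<longleftrightarrow> (\<forall>n<3. c n = 0) \<and> summable (\<lambda>n. (cmod (c n))\<^sup>2 / \<omega> n)"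

end

theory Submission
  imports Defs
begin

lemma decomp: "(x::nat) > 0 \<Longrightarrow> \<exists>a q. x = (2*a+1)*2^q"
proof (induction x rule: less_induct)
  case (less x)
  show ?case
  proof (cases "odd x")
    case True
    then have "x = (2*(x div 2)+1)*2^0" by simp
    then show ?thesis by blast
  next
    case False
    then have "x div 2 < x" "x div 2 > 0" using less.prems by auto
    then obtain a q where "x div 2 = (2*a+1)*2^q" using less.IH by blast
    then have "x = (2*a+1)*2^(Suc q)" using False by auto
    then show ?thesis by blast
  qed
qed

lemma decomp_np:
  assumes "(x::nat) \<ge> 3" "x \<notin> {2^i | i. i \<ge> (2::nat)}"
  shows "\<exists>a q. a \<ge> 1 \<and> x = (2*a+1)*2^q"
proof -
  obtain a q where aq: "x = (2*a+1)*2^q" using decomp[of x] assms by auto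
  have "a \<noteq> 0"
  proof
    assume "a = 0"
    then have x: "x = 2^q" using aq by simp
    have "q \<ge> 2"
    proof (rule ccontr)
      assume "\<not> q \<ge> 2"
      then have "q = 0 \<or> q = 1" by auto
      then show False using x assms(1) by auto
    qed
    then show False using x assms(2) by blast
  qed
  then show ?thesis using aq by (intro exI[of _ a] exI[of _ q]) auto
qed

lemma T_pow: "(collatzT ^^ q) ((2*a+1)*2^q) = 2*a+1"
proof (induction q)
  case 0 then show ?case by simp
next
  case (Suc q)
  have "collatzT ((2*a+1)*2^Suc q) = (2*a+1)*2^q" by (simp add: collatzT_def)
  then show ?case using Suc by (simp only: funpow_Suc_right o_apply)
qed

lemma T_odd: "collatzT (2*a+1) = 3*a+2"
  by (simp add: collatzT_def)

definition dq :: "nat \<Rightarrow> nat \<times> nat" where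
  "dq m = (SOME aq. fst aq \<ge> 1 \<and> 3*m+2 = (2*fst aq+1)*2^snd aq)"

lemma dq_prop:
  assumes "(m::nat) \<ge> 1" "3*m+2 \<notin> {2^i | i. i \<ge> (2::nat)}"
  shows "fst (dq m) \<ge> 1 \<and> 3*m+2 = (2*fst (dq m)+1)*2^snd (dq m)"
proof -
  obtain a q where "a \<ge> 1 \<and> 3*m+2 = (2*a+1)*2^q"
    using decomp_np[of "3*m+2"] assms by auto
  then have "\<exists>aq. fst aq \<ge> 1 \<and> 3*m+2 = (2*fst aq+1)*2^snd aq"
    by (intro exI[of _ "(a,q)"]) auto
  then show ?thesis unfolding dq_def by (rule someI_ex)
qed

fun stp :: "nat \<times> nat \<times> nat \<Rightarrow> nat \<times> nat \<times> nat" where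
  "stp (m,p,j) = (if 3*m+2 \<in> {2^i | i. i \<ge> (2::nat)} then (m,p,j)
     else (fst (dq m), p + snd (dq m) + 1, j + snd (dq m) + 1))"

lemma stp_np: "3*m+2 \<notin> {2^i | i. i \<ge> (2::nat)} \<Longrightarrow>
  stp (m,p,j) = (fst (dq m), p + snd (dq m) + 1, j + snd (dq m) + 1)"
  by (simp only: stp.simps if_not_P if_False)

lemma stp_p: "3*m+2 \<in> {2^i | i. i \<ge> (2::nat)} \<Longrightarrow> stp (m,p,j) = (m,p,j)"
  by (simp only: stp.simps if_P)

definition inv :: "(nat \<Rightarrow> real) \<Rightarrow> (nat \<Rightarrow> complex) \<Rightarrow> nat \<Rightarrow> nat \<times> nat \<times> nat \<Rightarrow> bool" where
  "inv \<omega> c k s = (case s of (m,p,j) \<Rightarrow> m \<ge> 1 \<and> 3*m+2 = (collatzT ^^ j) k \<and>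
     c k / complex_of_real (\<omega> k) = c ((6*m+4)*2^p) / complex_of_real (\<omega> ((6*m+4)*2^p)))"

lemma stp_inv:
  assumes h1: "\<forall>n m. m \<ge> 1 \<longrightarrow>
       c ((6*m+4) * 2^n) / complex_of_real (\<omega> ((6*m+4) * 2^n)) =
       c ((2*m+1) * 2^n) / complex_of_real (\<omega> ((2*m+1) * 2^n))"
    and I: "inv \<omega> c k (m,p,j)"
  shows "inv \<omega> c k (stp (m,p,j))"
proof (cases "3*m+2 \<in> {2^i | i. i \<ge> (2::nat)}")
  case True then show ?thesis using I stp_p by simp
next
  case False
  define a where "a = fst (dq m)"
  define q where "q = snd (dq m)"
  have m1: "m \<ge> 1" and jj: "3*m+2 = (collatzT ^^ j) k"
    and cc: "c k / complex_of_real (\<omega> k) = c ((6*m+4)*2^p) / complex_of_real (\<omega> ((6*m+4)*2^p))"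
    using I by (auto simp: inv_def)
  have a1: "a \<ge> 1" and dec: "3*m+2 = (2*a+1)*2^q"
    using dq_prop[OF m1 False] unfolding a_def q_def by auto
  have X: "(6*m+4)*2^p = (2*a+1)*2^(p+q+1)"
  proof -
    have "(6*m+4)*2^p = (3*m+2)*2^(p+1)" by (simp add: algebra_simps)
    also have "\<dots> = (2*a+1)*2^(p+q+1)" unfolding dec by (simp add: power_add algebra_simps)
    finally show ?thesis .
  qed
  have "j+q+1 = Suc q + j" by simp
  have "(collatzT ^^ (j+q+1)) k = (collatzT ^^ (Suc q)) ((collatzT ^^ j) k)"
    by (simp only: \<open>j+q+1 = Suc q + j\<close> funpow_add o_apply)
  also have "\<dots> = collatzT ((collatzT ^^ q) ((2*a+1)*2^q))"
    using jj dec by simp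
  also have "\<dots> = 3*a+2" by (simp only: T_pow T_odd)
  finally have jn: "3*a+2 = (collatzT ^^ (j+q+1)) k" by simp
  have "c k / complex_of_real (\<omega> k) = c ((6*a+4)*2^(p+q+1)) / complex_of_real (\<omega> ((6*a+4)*2^(p+q+1)))"
    using cc X h1 a1 by metis
  then show ?thesis using stp_np[OF False, of p j] a1 jn unfolding inv_def a_def q_def by simp
qed

theorem lemma2p5:
  fixes \<omega> :: "nat \<Rightarrow> real" and c :: "nat \<Rightarrow> complex"
  assumes pos: "\<forall>n\<ge>1. \<omega> n > 0"
    and inX: "in_X_omega \<omega> c"
    and h1: "\<forall>n m. m \<ge> 1 \<longrightarrow>
       c ((6*m+4) * 2^n) / complex_of_real (\<omega> ((6*m+4) * 2^n)) =
       c ((2*m+1) * 2^n) / complex_of_real (\<omega> ((2*m+1) * 2^n))"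
    and h2: "\<forall>n. c (2^(n+2)) = 0"
  shows "\<forall>k\<ge>3. k \<notin> {2^i | i. i \<ge> (2::nat)} \<longrightarrow>
    (\<exists>m p j :: nat \<Rightarrow> nat.
      (\<forall>n\<ge>1. c k = complex_of_real (\<omega> ((2 * m 1 + 1) * 2 ^ p 1) / \<omega> ((6 * m n + 4) * 2 ^ p n))
                     * c ((6 * m n + 4) * 2 ^ p n)) \<and>
      (\<forall>n\<ge>1. m n \<ge> 1) \<and>
      (\<forall>n\<ge>1. 3 * m n + 2 = (collatzT ^^ j n) k) \<and>
      (\<forall>n\<ge>1. j (n+1) > j n \<longleftrightarrow> 3 * m n + 2 \<notin> {2^i | i. i \<ge> (2::nat)}) \<and>
      (((\<forall>n\<ge>1. j n < j (n+1)) \<and>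
        (\<forall>n\<ge>1. (6 * m n + 4) * 2 ^ p n < (6 * m (n+1) + 4) * 2 ^ p (n+1))) \<or>
       (\<exists>N\<ge>1. \<forall>n\<ge>N. j n = j N \<and> (6 * m n + 4) * 2 ^ p n = (6 * m N + 4) * 2 ^ p N)))"
proof (intro allI impI)
  fix k :: nat
  assume k3: "k \<ge> 3" and kn: "k \<notin> {2^i | i. i \<ge> (2::nat)}"
  obtain a q where a1: "a \<ge> 1" and kd: "k = (2*a+1)*2^q" using decomp_np[OF k3 kn] by blast
  define st where "st n = (stp ^^ n) (a, q, q+1)" for n
  have "(collatzT ^^ Suc q) k = collatzT ((collatzT ^^ q) ((2*a+1)*2^q))" unfolding kd
    by (simp only: funpow.simps o_apply)
  also have "\<dots> = 3*a+2" by (simp only: T_pow T_odd)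
  finally have "(collatzT ^^ Suc q) k = 3*a+2" .
  then have i0: "inv \<omega> c k (a, q, q+1)"
    using h1 a1 kd unfolding inv_def by auto
  have invn: "inv \<omega> c k (st n)" for n
  proof (induction n)
    case 0 then show ?case using i0 by (simp add: st_def)
  next
    case (Suc n)
    obtain x y z where "st n = (x,y,z)" by (cases "st n") auto
    then show ?case using stp_inv[OF h1, of k x y z] Suc by (simp add: st_def)
  qed
  have stS: "st (Suc n) = stp (st n)" for n by (simp add: st_def)
  define m where "m n = fst (st (n-1))" for n
  define p where "p n = fst (snd (st (n-1)))" for n
  define j where "j n = snd (snd (st (n-1)))" for n
  have stn: "st (n-1) = (m n, p n, j n)" for n by (simp add: m_def p_def j_def)
  have stn1: "n \<ge> 1 \<Longrightarrow> st n = stp (m n, p n, j n)" for n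
    using stS[of "n-1"] stn[of n] by simp
  have m1p1: "m 1 = a" "p 1 = q" by (simp_all add: m_def p_def st_def)
  have invmpj: "m n \<ge> 1 \<and> 3*m n+2 = (collatzT ^^ j n) k \<and>
     c k / complex_of_real (\<omega> k) = c ((6*m n+4)*2^p n) / complex_of_real (\<omega> ((6*m n+4)*2^p n))" for n
    using invn[of "n-1"] unfolding stn inv_def by simp
  let ?P = "{2^i | i. i \<ge> (2::nat)}"
  have nxt: "n \<ge> 1 \<Longrightarrow> (m (n+1), p (n+1), j (n+1)) = stp (m n, p n, j n)" for n
    using stn[of "n+1"] stn1[of n] by simp
  show "\<exists>m p j :: nat \<Rightarrow> nat.
      (\<forall>n\<ge>1. c k = complex_of_real (\<omega> ((2 * m 1 + 1) * 2 ^ p 1) / \<omega> ((6 * m n + 4) * 2 ^ p n))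
                     * c ((6 * m n + 4) * 2 ^ p n)) \<and>
      (\<forall>n\<ge>1. m n \<ge> 1) \<and>
      (\<forall>n\<ge>1. 3 * m n + 2 = (collatzT ^^ j n) k) \<and>
      (\<forall>n\<ge>1. j (n+1) > j n \<longleftrightarrow> 3 * m n + 2 \<notin> {2^i | i. i \<ge> (2::nat)}) \<and>
      (((\<forall>n\<ge>1. j n < j (n+1)) \<and>
        (\<forall>n\<ge>1. (6 * m n + 4) * 2 ^ p n < (6 * m (n+1) + 4) * 2 ^ p (n+1))) \<or>
       (\<exists>N\<ge>1. \<forall>n\<ge>N. j n = j N \<and> (6 * m n + 4) * 2 ^ p n = (6 * m N + 4) * 2 ^ p N))"
  proof (rule exI[of _ m], rule exI[of _ p], rule exI[of _ j], intro conjI allI impI)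
    fix n :: nat assume "n \<ge> 1"
    define X where "X = (6 * m n + 4) * 2 ^ p n"
    have wk: "\<omega> k > 0" using pos k3 by auto
    have wX: "\<omega> X > 0" using pos unfolding X_def by auto
    have e: "c k / complex_of_real (\<omega> k) = c X / complex_of_real (\<omega> X)"
      using invmpj[of n] unfolding X_def by simp
    have "c k = complex_of_real (\<omega> k) * (c X / complex_of_real (\<omega> X))"
      using e wk by (simp add: field_simps)
    then show "c k = complex_of_real (\<omega> ((2 * m 1 + 1) * 2 ^ p 1) / \<omega> ((6 * m n + 4) * 2 ^ p n))
                     * c ((6 * m n + 4) * 2 ^ p n)"
      unfolding m1p1 kd[symmetric] X_def[symmetric] by (simp add: field_simps)
  next
    fix n :: nat assume "n \<ge> 1" then show "m n \<ge> 1" using invmpj by blast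
  next
    fix n :: nat assume "n \<ge> 1" then show "3 * m n + 2 = (collatzT ^^ j n) k" using invmpj by blast
  next
    fix n :: nat assume n1: "n \<ge> 1"
    show "j (n+1) > j n \<longleftrightarrow> 3 * m n + 2 \<notin> ?P"
      using nxt[OF n1] stp_np[of "m n" "p n" "j n"] stp_p[of "m n" "p n" "j n"] by (cases "3 * m n + 2 \<in> ?P") auto
  next
    show "((\<forall>n\<ge>1. j n < j (n+1)) \<and>
        (\<forall>n\<ge>1. (6 * m n + 4) * 2 ^ p n < (6 * m (n+1) + 4) * 2 ^ p (n+1))) \<or>
       (\<exists>N\<ge>1. \<forall>n\<ge>N. j n = j N \<and> (6 * m n + 4) * 2 ^ p n = (6 * m N + 4) * 2 ^ p N)"
    proof (cases "\<exists>N\<ge>1. 3 * m N + 2 \<in> ?P")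
      case True
      then obtain N where N1: "N \<ge> 1" and NP: "3 * m N + 2 \<in> ?P" by blast
      have "st (n-1) = st (N-1)" if "n \<ge> N" for n
        using that
      proof (induction n rule: dec_induct)
        case base then show ?case by simp
      next
        case (step n)
        have "st (Suc n - 1) = stp (st (n-1))" using step.hyps N1 stS[of "n-1"] by simp
        also have "\<dots> = stp (st (N-1))" using step.IH by simp
        also have "\<dots> = st (N-1)" using NP stn[of N] stp_p by simp
        finally show ?case .
      qed
      then have "\<forall>n\<ge>N. j n = j N \<and> (6 * m n + 4) * 2 ^ p n = (6 * m N + 4) * 2 ^ p N"
        using stn by (metis prod.inject)
      then show ?thesis using N1 by blast
    next
      case False
      have A: "j n < j (n+1) \<and> (6 * m n + 4) * 2 ^ p n < (6 * m (n+1) + 4) * 2 ^ p (n+1)"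
        if n1: "n \<ge> 1" for n
      proof -
        have np: "3 * m n + 2 \<notin> ?P" using False n1 by blast
        have d: "fst (dq (m n)) \<ge> 1 \<and> 3*m n+2 = (2*fst (dq (m n))+1)*2^snd (dq (m n))"
          using dq_prop[OF _ np] invmpj by blast
        have e: "m (n+1) = fst (dq (m n))" "p (n+1) = p n + snd (dq (m n)) + 1"
          "j (n+1) = j n + snd (dq (m n)) + 1"
          using nxt[OF n1] stp_np[OF np, of "p n" "j n"] by auto
        define a' where "a' = fst (dq (m n))"
        define q' where "q' = snd (dq (m n))"
        have "(6 * m n + 4) * 2 ^ p n = (3 * m n + 2) * 2 ^ (p n + 1)" by (simp add: algebra_simps)
        also have "\<dots> = (2*a'+1) * 2^(p n + q' + 1)"
          using d unfolding a'_def q'_def by (simp add: power_add algebra_simps)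
        also have "\<dots> < (6*a'+4) * 2^(p n + q' + 1)"
          by (rule mult_strict_right_mono) auto
        finally show ?thesis using e unfolding a'_def q'_def by simp
      qed
      then show ?thesis by blast
    qed
  qed
qed

end
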